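(* Let $\tau$ be a $\theta$-compatible stopping time with $\mathbb E_x\tau<\infty$ for all $x\in\mathbf X$, and let $\mu$ be a finite non-zero $P$-invariant Borel measure on $\mathbf X$. Then $S^\star\mu$ is a finite non-zero $Q$-invariant measure on $\mathbf X$, $S^\star\mu$ is absolutely continuous with respect to $\mu$, and $R^\star S^\star\mu=\mu$.
   Context: $\mathbf X$ complete separable metric space with Borel $\sigma$-algebra; $(X_n)$ a Markov chain, $\mathbb P_x$ its law started at $x$, $Pf(x)=\mathbb E_xf(X_1)$. $\theta$-compatible: $\mathbb P_x(\tau=0)=0$ for all $x$ and $\mathbb P_x$-a.s. $\tau\ge2\Rightarrow\tau\circ\theta=\tau-1$. For non-negative Borel $f$: $Qf(x)=\mathbb E_x[f(X_\tau)\mathbf 1_{\tau<\infty}]$, $Sf(x)=\mathbb E_x[f(X_1)\mathbf 1_{\tau=1}]$, $Rf(x)=\mathbb E_x[(f(X_0)+\dots+f(X_{\tau-1}))\mathbf 1_{\tau<\infty}]$. For a measure $m$, $S^\star m(A)=\int S\mathbf 1_A\,dm$ and $R^\star m(A)=\int R\mathbf 1_A\,dm$. A measure $m$ is $T$-invariant ($T=P$ or $Q$) if $\int T\mathbf 1_A\,dm=m(A)$ for all Borel $A$. *)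

theory Defs
  imports "HOL-Probability.Probability"
begin

abbreviation path_space :: "(nat \<Rightarrow> 'a::topological_space) measure" where
  "path_space \<equiv> PiM UNIV (\<lambda>_. borel)"

text \<open>Probability of the cylinder {X_0 in A 0, ..., X_n in A n} for the chain with
  transition kernel K started at x (finite-dimensional distributions).\<close>
fun fdd :: "('a \<Rightarrow> 'a measure) \<Rightarrow> (nat \<Rightarrow> 'a set) \<Rightarrow> nat \<Rightarrow> 'a \<Rightarrow> ennreal" where
  "fdd K A 0 x = indicator (A 0) x"
| "fdd K A (Suc n) x = indicator (A 0) x * (\<integral>\<^sup>+ y. fdd K (\<lambda>i. A (Suc i)) n y \<partial>K x)"

definition markov_kernel :: "('a::topological_space \<Rightarrow> 'a measure) \<Rightarrow> bool" where
  "markov_kernel K \<longleftrightarrow>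
     (\<forall>x. prob_space (K x) \<and> sets (K x) = sets borel) \<and>
     (\<forall>A \<in> sets borel. (\<lambda>x. emeasure (K x) A) \<in> borel_measurable borel)"

definition markov_laws :: "('a::topological_space \<Rightarrow> 'a measure) \<Rightarrow> ('a \<Rightarrow> (nat \<Rightarrow> 'a) measure) \<Rightarrow> bool" where
  "markov_laws K Px \<longleftrightarrow> markov_kernel K \<and>
     (\<forall>x. prob_space (Px x) \<and> sets (Px x) = sets path_space \<and>
        (\<forall>A n. (\<forall>i. A i \<in> sets borel) \<longrightarrow>
           emeasure (Px x) {\<omega> \<in> space path_space. \<forall>i\<le>n. \<omega> i \<in> A i} = fdd K A n x))"

text \<open>Stopping time (values in nat \<union> {\<infinity>}) for the natural filtration of the coordinate process.\<close>
definition stopping_time_nat :: "((nat \<Rightarrow> 'a::topological_space) \<Rightarrow> enat) \<Rightarrow> bool" where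
  "stopping_time_nat \<tau> \<longleftrightarrow>
     (\<forall>n::nat. {\<omega>. \<tau> \<omega> = enat n} \<in>
        sets (vimage_algebra UNIV (\<lambda>\<omega>. restrict \<omega> {..n}) (PiM {..n} (\<lambda>_. (borel :: 'a measure)))))"

definition shift :: "(nat \<Rightarrow> 'a) \<Rightarrow> (nat \<Rightarrow> 'a)" where
  "shift \<omega> = (\<lambda>n. \<omega> (Suc n))"

definition theta_compatible :: "('a \<Rightarrow> (nat \<Rightarrow> 'a) measure) \<Rightarrow> ((nat \<Rightarrow> 'a) \<Rightarrow> enat) \<Rightarrow> bool" where
  "theta_compatible Px \<tau> \<longleftrightarrow>
     (\<forall>x. emeasure (Px x) {\<omega> \<in> space (Px x). \<tau> \<omega> = 0} = 0) \<and>
     (\<forall>x. AE \<omega> in Px x. \<tau> \<omega> \<ge> 2 \<longrightarrow> \<tau> (shift \<omega>) = \<tau> \<omega> - 1)"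

definition Pop :: "('a \<Rightarrow> (nat \<Rightarrow> 'a) measure) \<Rightarrow> ('a \<Rightarrow> ennreal) \<Rightarrow> 'a \<Rightarrow> ennreal" where
  "Pop Px f x = (\<integral>\<^sup>+ \<omega>. f (\<omega> 1) \<partial>Px x)"

definition Qop :: "('a \<Rightarrow> (nat \<Rightarrow> 'a) measure) \<Rightarrow> ((nat \<Rightarrow> 'a) \<Rightarrow> enat) \<Rightarrow> ('a \<Rightarrow> ennreal) \<Rightarrow> 'a \<Rightarrow> ennreal" where
  "Qop Px \<tau> f x = (\<integral>\<^sup>+ \<omega>. f (\<omega> (the_enat (\<tau> \<omega>))) * indicator {\<omega>. \<tau> \<omega> < \<infinity>} \<omega> \<partial>Px x)"

definition Sop :: "('a \<Rightarrow> (nat \<Rightarrow> 'a) measure) \<Rightarrow> ((nat \<Rightarrow> 'a) \<Rightarrow> enat) \<Rightarrow> ('a \<Rightarrow> ennreal) \<Rightarrow> 'a \<Rightarrow> ennreal" where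
  "Sop Px \<tau> f x = (\<integral>\<^sup>+ \<omega>. f (\<omega> 1) * indicator {\<omega>. \<tau> \<omega> = 1} \<omega> \<partial>Px x)"

definition Rop :: "('a \<Rightarrow> (nat \<Rightarrow> 'a) measure) \<Rightarrow> ((nat \<Rightarrow> 'a) \<Rightarrow> enat) \<Rightarrow> ('a \<Rightarrow> ennreal) \<Rightarrow> 'a \<Rightarrow> ennreal" where
  "Rop Px \<tau> f x = (\<integral>\<^sup>+ \<omega>. (\<Sum>k < the_enat (\<tau> \<omega>). f (\<omega> k)) * indicator {\<omega>. \<tau> \<omega> < \<infinity>} \<omega> \<partial>Px x)"

definition star_fun :: "(('a::topological_space \<Rightarrow> ennreal) \<Rightarrow> 'a \<Rightarrow> ennreal) \<Rightarrow> 'a measure \<Rightarrow> 'a set \<Rightarrow> ennreal" where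
  "star_fun T m A = (\<integral>\<^sup>+ x. T (indicator A) x \<partial>m)"

definition star :: "(('a::topological_space \<Rightarrow> ennreal) \<Rightarrow> 'a \<Rightarrow> ennreal) \<Rightarrow> 'a measure \<Rightarrow> 'a measure" where
  "star T m = measure_of UNIV (sets borel) (star_fun T m)"

definition invariant :: "(('a::topological_space \<Rightarrow> ennreal) \<Rightarrow> 'a \<Rightarrow> ennreal) \<Rightarrow> 'a measure \<Rightarrow> bool" where
  "invariant T m \<longleftrightarrow> (\<forall>A \<in> sets borel. (\<integral>\<^sup>+ x. T (indicator A) x \<partial>m) = emeasure m A)"

end

theory Submission
  imports Defs
begin

lemma space_path[simp]: "space (path_space::(nat\<Rightarrow>'a::topological_space) measure) = UNIV"
  by (simp add: space_PiM)

lemma single_sets: "A \<in> sets borel \<Longrightarrow> {\<omega>. \<omega> i \<in> A} \<in> sets (path_space::(nat\<Rightarrow>'a::topological_space) measure)"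
proof -
  assume [measurable]: "A \<in> sets borel"
  have "{\<omega>\<in>space (path_space::(nat\<Rightarrow>'a::topological_space) measure). \<omega> i \<in> A} \<in> sets path_space" by measurable
  then show ?thesis by simp
qed

lemma top_path: "UNIV \<in> sets (path_space::(nat\<Rightarrow>'a::topological_space) measure)"
  using sets.top[of "path_space::(nat\<Rightarrow>'a::topological_space) measure"] by simp

definition cyl :: "(nat \<Rightarrow> 'a set) \<Rightarrow> nat \<Rightarrow> (nat \<Rightarrow> 'a) set" where
  "cyl A n = {\<omega>. \<forall>i\<le>n. \<omega> i \<in> A i}"

definition Cyls :: "(nat \<Rightarrow> 'a::topological_space) set set" where
  "Cyls = {cyl A n | A n. \<forall>i. A i \<in> sets borel}"

lemma cyl_sets: "(\<And>i. A i \<in> sets borel) \<Longrightarrow> cyl A n \<in> sets (path_space::(nat\<Rightarrow>'a::topological_space) measure)"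
proof -
  assume A: "\<And>i. A i \<in> sets borel"
  have "cyl A n = (\<Inter>i\<in>{..n}. {\<omega>\<in>space (path_space::(nat\<Rightarrow>'a::topological_space) measure). \<omega> i \<in> A i})"
    by (auto simp: cyl_def)
  also have "\<dots> \<in> sets path_space"
    using A by (intro sets.finite_INT) (auto intro: single_sets)
  finally show ?thesis .
qed

lemma Int_stable_Cyls: "Int_stable (Cyls :: (nat \<Rightarrow> 'a::topological_space) set set)"
proof (rule Int_stableI)
  fix a b :: "(nat \<Rightarrow> 'a) set" assume "a \<in> (Cyls :: (nat \<Rightarrow> 'a::topological_space) set set)" "b \<in> Cyls"
  then obtain A n B m where a: "a = cyl A n" "\<forall>i. A i \<in> sets borel" and b: "b = cyl B m" "\<forall>i. B i \<in> sets borel"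
    unfolding Cyls_def by blast
  let ?C = "\<lambda>i. (if i \<le> n then A i else UNIV) \<inter> (if i \<le> m then B i else UNIV)"
  have "a \<inter> b = cyl ?C (max n m)"
  proof (intro set_eqI iffI)
    fix \<omega> assume H: "\<omega> \<in> a \<inter> b"
    show "\<omega> \<in> cyl ?C (max n m)" unfolding cyl_def
    proof (intro CollectI allI impI)
      fix i assume "i \<le> max n m"
      show "\<omega> i \<in> ?C i" using H unfolding a(1) b(1) cyl_def by simp
    qed
  next
    fix \<omega> assume H: "\<omega> \<in> cyl ?C (max n m)"
    have "\<omega> \<in> a"  unfolding a(1) cyl_def
    proof (intro CollectI allI impI)
      fix i assume "i \<le> n" then have "i \<le> max n m" by simp
      then show "\<omega> i \<in> A i" using H \<open>i \<le> n\<close> unfolding cyl_def by force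
    qed
    moreover have "\<omega> \<in> b"  unfolding b(1) cyl_def
    proof (intro CollectI allI impI)
      fix i assume "i \<le> m" then have "i \<le> max n m" by simp
      then show "\<omega> i \<in> B i" using H \<open>i \<le> m\<close> unfolding cyl_def by force
    qed
    ultimately show "\<omega> \<in> a \<inter> b" by simp
  qed
  moreover have "\<forall>i. ?C i \<in> sets borel" using a(2) b(2) by simp
  ultimately show "a \<inter> b \<in> Cyls" unfolding Cyls_def by blast
qed

lemma sets_path_Cyls: "sets (path_space::(nat\<Rightarrow>'a::topological_space) measure) = sigma_sets UNIV Cyls"
proof
  show "sigma_sets UNIV Cyls \<subseteq> sets (path_space::(nat\<Rightarrow>'a::topological_space) measure)"
    by (rule sets.sigma_sets_subset'[of _ "path_space::(nat\<Rightarrow>'a::topological_space) measure", simplified])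
       (auto simp: Cyls_def intro: cyl_sets top_path)
  have eq: "(\<Pi>\<^sub>E i\<in>(UNIV::nat set). space (borel::'a measure)) = UNIV" by auto
  show "sets (path_space::(nat\<Rightarrow>'a::topological_space) measure) \<subseteq> sigma_sets UNIV Cyls"
    unfolding sets_PiM_single eq
  proof (rule sigma_sets_mono')
    show "{{f \<in> UNIV. f i \<in> A} |i A. i \<in> (UNIV::nat set) \<and> A \<in> sets (borel::'a measure)} \<subseteq> (Cyls :: (nat \<Rightarrow> 'a) set set)"
    proof safe
      fix i :: nat and A :: "'a set" assume "A \<in> sets borel"
      then have "{f \<in> UNIV. f i \<in> A} = cyl (\<lambda>j. if j = i then A else UNIV) i"
        by (auto simp: cyl_def)
      then show "{f \<in> UNIV. f i \<in> A} \<in> Cyls"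
        using \<open>A \<in> sets borel\<close> unfolding Cyls_def by (intro CollectI exI[of _ "\<lambda>j. if j = i then A else UNIV"] exI[of _ i]) auto
    qed
  qed
qed


lemma shift_meas: "shift \<in> measurable (path_space::(nat\<Rightarrow>'a::topological_space) measure) path_space"
proof -
  have "(\<lambda>\<omega> i. \<omega> (Suc i)) \<in> measurable (path_space::(nat\<Rightarrow>'a::topological_space) measure) path_space"
    by (rule measurable_PiM_single') (auto intro: measurable_component_singleton)
  then show ?thesis unfolding shift_def[abs_def] .
qed

locale mchain =
  fixes K :: "'a::polish_space \<Rightarrow> 'a measure" and Px :: "'a \<Rightarrow> (nat \<Rightarrow> 'a) measure"
  assumes chain: "markov_laws K Px"
begin

lemma prob_Px: "prob_space (Px x)" and sets_Px[measurable_cong]: "sets (Px x) = sets path_space"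
  using chain unfolding markov_laws_def by auto

lemma space_Px[simp]: "space (Px x) = UNIV"
  using sets_eq_imp_space_eq[OF sets_Px] by simp

lemma prob_K: "prob_space (K x)" and sets_K[measurable_cong]: "sets (K x) = sets borel"
  using chain unfolding markov_laws_def markov_kernel_def by auto

lemma space_K[simp]: "space (K x) = UNIV"
  using sets_eq_imp_space_eq[OF sets_K] by simp

lemma K_kernel: "K \<in> measurable borel (subprob_algebra borel)"
proof (rule measurable_subprob_algebra)
  show "\<And>a. a \<in> space borel \<Longrightarrow> subprob_space (K a)" using prob_K prob_space_imp_subprob_space by blast
  show "\<And>a. a \<in> space borel \<Longrightarrow> sets (K a) = sets borel" using sets_K by blast
  show "\<And>A. A \<in> sets borel \<Longrightarrow> (\<lambda>a. emeasure (K a) A) \<in> borel_measurable borel"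
    using chain unfolding markov_laws_def markov_kernel_def by auto
qed

lemma Px_cyl: "(\<And>i. A i \<in> sets borel) \<Longrightarrow> emeasure (Px x) (cyl A n) = fdd K A n x"
proof -
  assume "\<And>i. A i \<in> sets borel"
  then have "emeasure (Px x) {\<omega> \<in> space path_space. \<forall>i\<le>n. \<omega> i \<in> A i} = fdd K A n x"
    using chain unfolding markov_laws_def by blast
  then show ?thesis by (simp add: cyl_def)
qed

lemma fdd0: "fdd K A 0 = indicator (A 0)"
  by (rule ext) simp

lemma fdd_meas: "(\<And>i. A i \<in> sets borel) \<Longrightarrow> fdd K A n \<in> borel_measurable borel"
proof (induction n arbitrary: A)
  case 0
  then show ?case by simp
next
  case (Suc n)
  have IH[measurable]: "fdd K (\<lambda>i. A (Suc i)) n \<in> borel_measurable borel"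
    using Suc by auto
  have [measurable]: "A 0 \<in> sets borel" using Suc by auto
  have "(\<lambda>x. \<integral>\<^sup>+ y. fdd K (\<lambda>i. A (Suc i)) n y \<partial>K x) \<in> borel_measurable borel"
    by (rule nn_integral_measurable_subprob_algebra2[OF _ K_kernel]) measurable
  then show ?case by simp
qed

lemma Px_kernel: "Px \<in> measurable borel (subprob_algebra path_space)"
proof (rule measurable_subprob_algebra_generated[OF sets_path_Cyls Int_stable_Cyls])
  show "Cyls \<subseteq> Pow UNIV" by auto
  show "\<And>a. subprob_space (Px a)" using prob_Px prob_space_imp_subprob_space by blast
  show "\<And>a. sets (Px a) = sets path_space" using sets_Px by blast
  show "(\<lambda>a. emeasure (Px a) UNIV) \<in> borel_measurable borel"
    using prob_space.emeasure_space_1[OF prob_Px] by simp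
  fix C assume "C \<in> (Cyls :: (nat \<Rightarrow> 'a) set set)"
  then obtain A n where C: "C = cyl A n" and A: "\<forall>i. A i \<in> sets borel" unfolding Cyls_def by blast
  show "(\<lambda>a. emeasure (Px a) C) \<in> borel_measurable borel"
    unfolding C using A by (subst Px_cyl) (auto intro: fdd_meas)
qed

lemma Px_kernel'[measurable]: "Px \<in> measurable (borel::'a measure) (subprob_algebra path_space)"
  by (rule Px_kernel)

lemma kern_meas: "F \<in> borel_measurable path_space \<Longrightarrow> (\<lambda>x. \<integral>\<^sup>+\<omega>. F \<omega> \<partial>Px x) \<in> borel_measurable borel"
  by (rule measurable_compose[OF Px_kernel nn_integral_measurable_subprob_algebra])

lemma K_eq: "distr (Px x) borel (\<lambda>\<omega>. \<omega> 1) = K x"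
proof (rule measure_eqI)
  show "sets (distr (Px x) borel (\<lambda>\<omega>. \<omega> 1)) = sets (K x)" by (simp add: sets_K)
  fix B assume B: "B \<in> sets (distr (Px x) borel (\<lambda>\<omega>. \<omega> 1))"
  then have Bb: "B \<in> sets borel" by simp
  let ?A = "\<lambda>i::nat. if i = 1 then B else UNIV"
  have m1: "(\<lambda>\<omega>. \<omega> 1) \<in> measurable (Px x) borel"
    by (simp add: measurable_cong_sets[OF sets_Px refl])
  have "emeasure (distr (Px x) borel (\<lambda>\<omega>. \<omega> 1)) B = emeasure (Px x) {\<omega>. \<omega> 1 \<in> B}"
    using Bb m1 by (simp add: emeasure_distr vimage_def)
  also have "{\<omega>. \<omega> 1 \<in> B} = cyl ?A 1" by (auto simp: cyl_def)
  also have "emeasure (Px x) (cyl ?A 1) = fdd K ?A 1 x" using Bb by (intro Px_cyl) auto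
  also have "\<dots> = emeasure (K x) B"
    using Bb by (simp add: One_nat_def sets_K fdd0 cong: nn_integral_cong)
  finally show "emeasure (distr (Px x) borel (\<lambda>\<omega>. \<omega> 1)) B = emeasure (K x) B" .
qed

lemma AE_start: "AE \<omega> in Px x. \<omega> 0 = x"
proof -
  have "emeasure (Px x) (cyl (\<lambda>_. {x}) 0) = 1" by (subst Px_cyl) auto
  moreover have "cyl (\<lambda>_. {x}) 0 = {\<omega>. \<omega> 0 = x}" by (auto simp: cyl_def)
  ultimately have "emeasure (Px x) {\<omega>\<in>space (Px x). \<omega> 0 = x} = 1" by simp
  then show ?thesis using prob_space.AE_in_set_eq_1[OF prob_Px, of "{\<omega>\<in>space (Px x). \<omega> 0 = x}"]
    sets_Px single_sets[of "{x}" 0] by (simp add: measure_def)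
qed

lemma Px_kernel_K: "Px \<in> measurable (K x) (subprob_algebra path_space)"
  using Px_kernel by (simp add: measurable_cong_sets[OF sets_K refl])

lemma shift_meas_Px: "shift \<in> measurable (Px x) path_space"
  using shift_meas by (simp add: measurable_cong_sets[OF sets_Px refl])

lemma shift_cyl: "shift -` cyl A n = cyl (case_nat UNIV A) (Suc n)"
proof (intro set_eqI iffI)
  fix \<omega> assume "\<omega> \<in> shift -` cyl A n"
  then have H: "\<forall>i\<le>n. \<omega> (Suc i) \<in> A i" by (simp add: cyl_def shift_def)
  show "\<omega> \<in> cyl (case_nat UNIV A) (Suc n)" unfolding cyl_def
  proof (intro CollectI allI impI)
    fix i assume "i \<le> Suc n" then show "\<omega> i \<in> case_nat UNIV A i" using H by (cases i) auto
  qed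
next
  fix \<omega> assume "\<omega> \<in> cyl (case_nat UNIV A) (Suc n)"
  then have H: "\<forall>i\<le>Suc n. \<omega> i \<in> case_nat UNIV A i" by (simp add: cyl_def)
  show "\<omega> \<in> shift -` cyl A n" unfolding cyl_def shift_def
  proof (intro vimageI2 CollectI allI impI)
    fix i assume "i \<le> n" then show "\<omega> (Suc i) \<in> A i" using H[rule_format, of "Suc i"] by simp
  qed
qed

lemma shift_law: "distr (Px x) path_space shift = bind (K x) Px"
proof (rule measure_eqI_generator_eq[OF Int_stable_Cyls, of UNIV _ _ "\<lambda>_. UNIV"])
  show "Cyls \<subseteq> Pow UNIV" by auto
  show "sets (distr (Px x) path_space shift) = sigma_sets UNIV Cyls" by (simp add: sets_path_Cyls)
  show "sets (bind (K x) Px) = sigma_sets UNIV Cyls"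
    by (subst sets_bind[where N=path_space]) (auto simp: sets_Px sets_path_Cyls)
  have "UNIV = cyl (\<lambda>_. UNIV :: 'a set) 0" by (auto simp: cyl_def)
  moreover have "\<forall>i::nat. (UNIV::'a set) \<in> sets borel" by simp
  ultimately show "range (\<lambda>_. UNIV) \<subseteq> (Cyls :: (nat \<Rightarrow> 'a) set set)" unfolding Cyls_def by blast
  show "(\<Union>i::nat. UNIV) = (UNIV :: (nat \<Rightarrow> 'a) set)" by simp
  show "\<And>i::nat. emeasure (distr (Px x) path_space shift) UNIV \<noteq> \<infinity>"
  proof -
    have "emeasure (distr (Px x) path_space shift) UNIV = emeasure (Px x) UNIV"
      using shift_meas_Px by (simp add: emeasure_distr top_path)
    then show "\<And>i::nat. emeasure (distr (Px x) path_space shift) UNIV \<noteq> \<infinity>"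
      using prob_space.emeasure_space_1[OF prob_Px, of x] by simp
  qed
  fix C assume "C \<in> (Cyls :: (nat \<Rightarrow> 'a) set set)"
  then obtain A n where C: "C = cyl A n" and A: "\<forall>i. A i \<in> sets borel" unfolding Cyls_def by blast
  have A': "\<And>i. case_nat UNIV A i \<in> sets borel" for i using A by (simp split: nat.split)
  have "emeasure (distr (Px x) path_space shift) C = emeasure (Px x) (shift -` cyl A n)"
    using shift_meas_Px A C by (simp add: emeasure_distr cyl_sets)
  also have "\<dots> = fdd K (case_nat UNIV A) (Suc n) x"
    unfolding shift_cyl by (rule Px_cyl) (simp add: A')
  also have "\<dots> = (\<integral>\<^sup>+ y. fdd K A n y \<partial>K x)" by simp
  also have "\<dots> = (\<integral>\<^sup>+ y. emeasure (Px y) C \<partial>K x)"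
    unfolding C using A by (intro nn_integral_cong) (simp add: Px_cyl)
  also have "\<dots> = emeasure (bind (K x) Px) C"
    using A C by (subst emeasure_bind[OF _ Px_kernel_K]) (auto intro: cyl_sets)
  finally show "emeasure (distr (Px x) path_space shift) C = emeasure (bind (K x) Px) C" .
qed

lemma MP:
  assumes h[measurable]: "h \<in> borel_measurable borel" and G[measurable]: "G \<in> borel_measurable path_space"
  shows "(\<integral>\<^sup>+\<omega>. h (\<omega> 1) * G (shift \<omega>) \<partial>Px x) = (\<integral>\<^sup>+\<omega>. h (\<omega> 1) * (\<integral>\<^sup>+\<omega>'. G \<omega>' \<partial>Px (\<omega> 1)) \<partial>Px x)"
proof -
  have hG: "(\<lambda>\<omega>'. h (\<omega>' 0) * G \<omega>') \<in> borel_measurable path_space" by measurable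
  have EG[measurable]: "(\<lambda>y. \<integral>\<^sup>+\<omega>'. G \<omega>' \<partial>Px y) \<in> borel_measurable borel" by (rule kern_meas) simp
  have "(\<integral>\<^sup>+\<omega>. h (\<omega> 1) * G (shift \<omega>) \<partial>Px x) = (\<integral>\<^sup>+\<omega>'. h (\<omega>' 0) * G \<omega>' \<partial>distr (Px x) path_space shift)"
    using hG shift_meas_Px by (subst nn_integral_distr) (auto simp: shift_def)
  also have "\<dots> = (\<integral>\<^sup>+y. \<integral>\<^sup>+\<omega>'. h (\<omega>' 0) * G \<omega>' \<partial>Px y \<partial>K x)"
    unfolding shift_law by (rule nn_integral_bind[OF hG Px_kernel_K])
  also have "\<dots> = (\<integral>\<^sup>+y. h y * (\<integral>\<^sup>+\<omega>'. G \<omega>' \<partial>Px y) \<partial>K x)"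
  proof (rule nn_integral_cong)
    fix y
    have "(\<integral>\<^sup>+\<omega>'. h (\<omega>' 0) * G \<omega>' \<partial>Px y) = (\<integral>\<^sup>+\<omega>'. h y * G \<omega>' \<partial>Px y)"
      using AE_start[of y] by (intro nn_integral_cong_AE) auto
    also have "\<dots> = h y * (\<integral>\<^sup>+\<omega>'. G \<omega>' \<partial>Px y)"
      by (rule nn_integral_cmult) (simp add: measurable_cong_sets[OF sets_Px refl])
    finally show "(\<integral>\<^sup>+\<omega>'. h (\<omega>' 0) * G \<omega>' \<partial>Px y) = h y * (\<integral>\<^sup>+\<omega>'. G \<omega>' \<partial>Px y)" .
  qed
  also have "\<dots> = (\<integral>\<^sup>+y. h y * (\<integral>\<^sup>+\<omega>'. G \<omega>' \<partial>Px y) \<partial>distr (Px x) borel (\<lambda>\<omega>. \<omega> 1))"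
    by (simp only: K_eq)
  also have "\<dots> = (\<integral>\<^sup>+\<omega>. h (\<omega> 1) * (\<integral>\<^sup>+\<omega>'. G \<omega>' \<partial>Px (\<omega> 1)) \<partial>Px x)"
    by (subst nn_integral_distr) (auto simp: measurable_cong_sets[OF sets_Px refl])
  finally show ?thesis .
qed

end


lemma measure_of_emeasure_eq:
  fixes M :: "'a::topological_space measure"
  assumes sM: "sets M = sets borel" and F: "\<And>A. A \<in> sets borel \<Longrightarrow> F A = emeasure M A"
  shows "measure_of UNIV (sets borel) F = M" and "measure_space UNIV (sets borel) F"
proof -
  have sp: "space M = UNIV" using sets_eq_imp_space_eq[OF sM] by simp
  have ss: "sigma_sets UNIV (sets (borel::'a measure)) = sets borel"
    using sets.sigma_sets_eq[of "borel::'a measure"] by simp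
  have "measure_of UNIV (sets borel) F = measure_of UNIV (sets borel) (emeasure M)"
    by (rule measure_of_eq) (auto simp: ss F)
  also have "\<dots> = M" using measure_of_of_measure[of M] by (simp add: sp sM)
  finally show "measure_of UNIV (sets borel) F = M" .
  have "measure_space UNIV (sigma_sets UNIV (sets borel)) F = measure_space UNIV (sigma_sets UNIV (sets borel)) (emeasure M)"
    by (rule measure_space_eq) (auto simp: ss F)
  then show "measure_space UNIV (sets borel) F" using measure_space[of M] by (simp add: ss sp sM)
qed

locale setting = mchain K Px for K :: "'a::polish_space \<Rightarrow> 'a measure" and Px +
  fixes \<tau> :: "(nat \<Rightarrow> 'a) \<Rightarrow> enat" and \<mu> :: "'a measure"
  assumes stop: "stopping_time_nat \<tau>"
    and compat: "theta_compatible Px \<tau>"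
    and integrable_tau: "\<forall>x. (\<integral>\<^sup>+ \<omega>. ennreal_of_enat (\<tau> \<omega>) \<partial>Px x) < \<infinity>"
    and mu_sets: "sets \<mu> = sets borel"
    and mu_finite: "finite_measure \<mu>"
    and mu_nonzero: "emeasure \<mu> (space \<mu>) \<noteq> 0"
    and mu_inv: "invariant (Pop Px) \<mu>"
begin

lemma space_mu[simp]: "space \<mu> = UNIV"
  using sets_eq_imp_space_eq[OF mu_sets] by simp

lemma tau_restrict: obtains B where "B \<in> sets (PiM {..n} (\<lambda>_. (borel :: 'a measure)))"
   "{\<omega>. \<tau> \<omega> = enat n} = (\<lambda>\<omega>. restrict \<omega> {..n}) -` B"
proof -
  have "(\<lambda>\<omega>::nat \<Rightarrow> 'a. restrict \<omega> {..n}) \<in> UNIV \<rightarrow> space (PiM {..n} (\<lambda>_. (borel :: 'a measure)))"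
    by (simp add: space_PiM)
  note sv = sets_vimage_algebra2[OF this]
  have "{\<omega>. \<tau> \<omega> = enat n} \<in> sets (vimage_algebra UNIV (\<lambda>\<omega>. restrict \<omega> {..n}) (PiM {..n} (\<lambda>_. (borel :: 'a measure))))"
    using stop unfolding stopping_time_nat_def by blast
  then have "{\<omega>. \<tau> \<omega> = enat n} \<in> {(\<lambda>\<omega>. restrict \<omega> {..n}) -` A \<inter> UNIV | A. A \<in> sets (PiM {..n} (\<lambda>_. (borel :: 'a measure)))}"
    by (simp only: sv)
  then obtain B where
    "B \<in> sets (PiM {..n} (\<lambda>_. (borel :: 'a measure)))"
    "{\<omega>. \<tau> \<omega> = enat n} = (\<lambda>\<omega>. restrict \<omega> {..n}) -` B \<inter> UNIV"
    by (auto simp only: mem_Collect_eq)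
  then show ?thesis using that by simp
qed

lemma tau_sets: "{\<omega>. \<tau> \<omega> = enat n} \<in> sets path_space"
proof -
  obtain B where B: "B \<in> sets (PiM {..n} (\<lambda>_. (borel :: 'a measure)))"
   "{\<omega>. \<tau> \<omega> = enat n} = (\<lambda>\<omega>. restrict \<omega> {..n}) -` B" by (rule tau_restrict)
  have "(\<lambda>\<omega>. restrict \<omega> {..n}) -` B \<inter> space path_space \<in> sets (path_space :: (nat \<Rightarrow> 'a) measure)"
    by (rule measurable_sets[OF measurable_restrict_subset B(1)]) simp
  then show ?thesis using B(2) by simp
qed

lemma tau_inf_sets: "{\<omega>. \<tau> \<omega> = \<infinity>} \<in> sets path_space"
proof -
  have "{\<omega>. \<tau> \<omega> = \<infinity>} = UNIV - (\<Union>n. {\<omega>. \<tau> \<omega> = enat n})"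
    by (auto simp: not_infinity_eq)
  also have "\<dots> \<in> sets path_space"
    using tau_sets by (intro sets.Diff top_path sets.countable_UN) auto
  finally show ?thesis .
qed

lemma tau_meas[measurable]: "\<tau> \<in> measurable path_space (count_space UNIV)"
  unfolding measurable_count_space_eq2_countable
proof (intro conjI ballI)
  fix a :: enat
  show "\<tau> -` {a} \<inter> space path_space \<in> sets path_space"
  proof (cases a)
    case (enat n) then show ?thesis using tau_sets[of n] by (simp add: vimage_def)
  next
    case infinity then show ?thesis using tau_inf_sets by (simp add: vimage_def)
  qed
qed auto

lemma tau1: "\<tau> \<omega> = 1 \<longleftrightarrow> \<tau> (\<lambda>k. if k = 0 then \<omega> 0 else \<omega> 1) = 1"
proof -
  obtain B where "B \<in> sets (PiM {..1} (\<lambda>_. (borel :: 'a measure)))" and B: "{\<omega>. \<tau> \<omega> = enat 1} = (\<lambda>\<omega>. restrict \<omega> {..1}) -` B"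
    by (rule tau_restrict)
  have "restrict \<omega> {..1} = restrict (\<lambda>k. if k = 0 then \<omega> 0 else \<omega> 1) {..1::nat}"
  proof (rule ext)
    fix k show "restrict \<omega> {..1} k = restrict (\<lambda>k. if k = 0 then \<omega> 0 else \<omega> 1) {..1::nat} k"
      by (cases k) (auto simp: restrict_def)
  qed
  then have "\<omega> \<in> {\<omega>. \<tau> \<omega> = enat 1} \<longleftrightarrow> (\<lambda>k. if k = 0 then \<omega> 0 else \<omega> 1) \<in> {\<omega>. \<tau> \<omega> = enat 1}"
    unfolding B by simp
  then show ?thesis by (simp add: one_enat_def)
qed

definition E :: "'a \<Rightarrow> 'a set" where
  "E x = {y. \<tau> (\<lambda>k. if k = 0 then x else y) = 1}"

lemma E_sets[measurable]: "E x \<in> sets borel"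
proof -
  have m: "(\<lambda>y. \<lambda>k::nat. if k = 0 then x else y) \<in> measurable borel (path_space :: (nat \<Rightarrow> 'a) measure)"
    by (rule measurable_PiM_single') auto
  have "{\<omega>. \<tau> \<omega> = 1} \<in> sets path_space"
    using tau_sets[of 1] by (simp add: one_enat_def)
  from measurable_sets[OF m this] show ?thesis by (simp add: E_def vimage_def)
qed

lemma AE_tau1: "AE \<omega> in Px x. (\<tau> \<omega> = 1) = (\<omega> 1 \<in> E x)"
  using AE_start[of x]
proof eventually_elim
  case (elim \<omega>)
  have eq: "(\<lambda>k. if k = 0 then \<omega> 0 else \<omega> 1) = (\<lambda>k::nat. if k = 0 then x else \<omega> 1)"
    using elim by (intro ext) simp
  from tau1[of \<omega>] have "(\<tau> \<omega> = 1) = (\<tau> (\<lambda>k. if k = 0 then x else \<omega> 1) = 1)" unfolding eq .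
  then show ?case unfolding E_def by (simp only: mem_Collect_eq)
qed

lemma AE_tau_pos: "AE \<omega> in Px x. \<tau> \<omega> \<noteq> 0"
proof (rule AE_I')
  have "{\<omega> \<in> space (Px x). \<tau> \<omega> = 0} \<in> sets (Px x)"
    using tau_sets[of 0] by (simp add: zero_enat_def sets_Px)
  then show "{\<omega> \<in> space (Px x). \<tau> \<omega> = 0} \<in> null_sets (Px x)"
    using compat unfolding theta_compatible_def by auto
qed auto

lemma AE_tau_shift: "AE \<omega> in Px x. \<tau> \<omega> \<ge> 2 \<longrightarrow> \<tau> (shift \<omega>) = \<tau> \<omega> - 1"
  using compat unfolding theta_compatible_def by auto

lemma AE_tau_fin: "AE \<omega> in Px x. \<tau> \<omega> \<noteq> \<infinity>"
proof (rule AE_I')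
  let ?N = "{\<omega> \<in> space (Px x). \<tau> \<omega> = \<infinity>}"
  have N: "?N \<in> sets (Px x)" using tau_inf_sets by (simp add: sets_Px)
  have "\<infinity> * emeasure (Px x) ?N = (\<integral>\<^sup>+\<omega>. \<infinity> * indicator ?N \<omega> \<partial>Px x)"
    using N by (rule nn_integral_cmult_indicator[symmetric])
  also have "\<dots> \<le> (\<integral>\<^sup>+ \<omega>. ennreal_of_enat (\<tau> \<omega>) \<partial>Px x)"
    by (intro nn_integral_mono) (auto split: split_indicator)
  also have "\<dots> < \<infinity>" using integrable_tau by auto
  finally have "emeasure (Px x) ?N = 0"
    by (cases "emeasure (Px x) ?N = 0") (auto simp: ennreal_mult_eq_top_iff)
  then show "?N \<in> null_sets (Px x)" using N by auto
qed auto

lemma tau1_sets[measurable]: "{\<omega>. \<tau> \<omega> = 1} \<in> sets path_space"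
  using tau_sets[of 1] by (simp add: one_enat_def)

lemma ind1_meas[measurable]: "indicator {\<omega>. \<tau> \<omega> = 1} \<in> borel_measurable path_space"
  by (rule borel_measurable_indicator[OF tau1_sets])

lemma comp1_meas: "f \<in> borel_measurable borel \<Longrightarrow> (\<lambda>\<omega>::nat\<Rightarrow>'a. f (\<omega> 1)) \<in> borel_measurable path_space"
  by (rule measurable_compose[OF measurable_component_singleton]) auto

lemma Pop_K: "f \<in> borel_measurable borel \<Longrightarrow> Pop Px f x = integral\<^sup>N (K x) f"
  unfolding Pop_def
  by (subst K_eq[symmetric], subst nn_integral_distr) (auto simp: measurable_cong_sets[OF sets_Px refl])

lemma Pop_meas[measurable]: "f \<in> borel_measurable borel \<Longrightarrow> Pop Px f \<in> borel_measurable borel"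
  unfolding Pop_def[abs_def] by (rule kern_meas, rule comp1_meas)

lemma Sop_meas[measurable]: "f \<in> borel_measurable borel \<Longrightarrow> Sop Px \<tau> f \<in> borel_measurable borel"
proof -
  assume f: "f \<in> borel_measurable borel"
  note [measurable] = comp1_meas[OF f]
  show ?thesis unfolding Sop_def[abs_def] by (rule kern_meas) measurable
qed

lemma Sop_le: "Sop Px \<tau> f x \<le> Pop Px f x"
  unfolding Sop_def Pop_def by (intro nn_integral_mono) (auto split: split_indicator)

definition Sk :: "'a \<Rightarrow> 'a measure" where
  "Sk x = distr (density (Px x) (indicator {\<omega>. \<tau> \<omega> = 1})) borel (\<lambda>\<omega>. \<omega> 1)"

lemma sets_Sk[measurable_cong]: "sets (Sk x) = sets borel"
  by (simp add: Sk_def)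

lemma space_Sk[simp]: "space (Sk x) = UNIV"
  using sets_eq_imp_space_eq[OF sets_Sk] by simp

lemma Sk_int: "f \<in> borel_measurable borel \<Longrightarrow> integral\<^sup>N (Sk x) f = Sop Px \<tau> f x"
proof -
  assume f[measurable]: "f \<in> borel_measurable borel"
  note [measurable] = comp1_meas[OF f]
  have "integral\<^sup>N (Sk x) f = integral\<^sup>N (density (Px x) (indicator {\<omega>. \<tau> \<omega> = 1})) (\<lambda>\<omega>. f (\<omega> 1))"
    unfolding Sk_def by (subst nn_integral_distr) (auto simp: measurable_cong_sets[OF sets_Px refl])
  also have "\<dots> = (\<integral>\<^sup>+\<omega>. indicator {\<omega>. \<tau> \<omega> = 1} \<omega> * f (\<omega> 1) \<partial>Px x)"
    by (subst nn_integral_density) (auto simp: measurable_cong_sets[OF sets_Px refl])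
  also have "\<dots> = Sop Px \<tau> f x" unfolding Sop_def by (simp add: mult.commute)
  finally show ?thesis .
qed

lemma Sk_emeasure: "A \<in> sets borel \<Longrightarrow> emeasure (Sk x) A = Sop Px \<tau> (indicator A) x"
  using Sk_int[of "indicator A" x] by (simp add: sets_Sk)

lemma Sk_kernel: "Sk \<in> measurable borel (subprob_algebra borel)"
proof (rule measurable_subprob_algebra)
  fix x :: 'a
  have "emeasure (Sk x) (space (Sk x)) = Sop Px \<tau> (indicator UNIV) x" by (simp add: Sk_emeasure)
  also have "\<dots> \<le> Pop Px (indicator UNIV) x" by (rule Sop_le)
  also have "\<dots> = emeasure (K x) UNIV" by (subst Pop_K) auto
  also have "\<dots> = 1" using prob_space.emeasure_space_1[OF prob_K, of x] by simp
  finally show "subprob_space (Sk x)" by (intro subprob_spaceI) auto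
  show "sets (Sk x) = sets borel" by (rule sets_Sk)
next
  fix A :: "'a set" assume [measurable]: "A \<in> sets borel"
  have "(\<lambda>x. Sop Px \<tau> (indicator A) x) \<in> borel_measurable borel" by measurable
  then show "(\<lambda>x. emeasure (Sk x) A) \<in> borel_measurable borel"
    by (simp add: Sk_emeasure)
qed

definition nu :: "'a measure" where "nu = bind \<mu> Sk"

lemma Sk_kernel_mu: "Sk \<in> measurable \<mu> (subprob_algebra borel)"
  using Sk_kernel by (simp add: measurable_cong_sets[OF mu_sets refl])

lemma sets_nu[measurable_cong]: "sets nu = sets borel"
  unfolding nu_def by (subst sets_bind[where N=borel]) (auto simp: sets_Sk)

lemma space_nu[simp]: "space nu = UNIV"
  using sets_eq_imp_space_eq[OF sets_nu] by simp

lemma nu_int: "f \<in> borel_measurable borel \<Longrightarrow> integral\<^sup>N nu f = (\<integral>\<^sup>+x. Sop Px \<tau> f x \<partial>\<mu>)"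
  unfolding nu_def by (subst nn_integral_bind[OF _ Sk_kernel_mu]) (auto simp: Sk_int)

lemma nu_emeasure: "A \<in> sets borel \<Longrightarrow> star_fun (Sop Px \<tau>) \<mu> A = emeasure nu A"
  using nu_int[of "indicator A"] by (simp add: sets_nu star_fun_def)

lemma star_S: "star (Sop Px \<tau>) \<mu> = nu" and ms_S: "measure_space UNIV (sets borel) (star_fun (Sop Px \<tau>) \<mu>)"
  unfolding star_def using measure_of_emeasure_eq[OF sets_nu nu_emeasure] by auto

lemma K_kernel_mu: "K \<in> measurable \<mu> (subprob_algebra borel)"
  using K_kernel by (simp add: measurable_cong_sets[OF mu_sets refl])

lemma K_inv: "bind \<mu> K = \<mu>"
proof (rule measure_eqI)
  show sb: "sets (bind \<mu> K) = sets \<mu>" by (subst sets_bind[where N=borel]) (auto simp: sets_K mu_sets)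
  fix A assume "A \<in> sets (bind \<mu> K)"
  then have A: "A \<in> sets borel" using sb mu_sets by simp
  have "emeasure (bind \<mu> K) A = (\<integral>\<^sup>+x. emeasure (K x) A \<partial>\<mu>)"
    using A by (subst emeasure_bind[OF _ K_kernel_mu]) auto
  also have "\<dots> = (\<integral>\<^sup>+x. Pop Px (indicator A) x \<partial>\<mu>)"
    using A by (intro nn_integral_cong) (simp add: Pop_K sets_K)
  also have "\<dots> = emeasure \<mu> A" using mu_inv A unfolding invariant_def by blast
  finally show "emeasure (bind \<mu> K) A = emeasure \<mu> A" .
qed

lemma inv_ext: "f \<in> borel_measurable borel \<Longrightarrow> (\<integral>\<^sup>+x. Pop Px f x \<partial>\<mu>) = integral\<^sup>N \<mu> f"
proof -
  assume f: "f \<in> borel_measurable borel"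
  have "(\<integral>\<^sup>+x. Pop Px f x \<partial>\<mu>) = (\<integral>\<^sup>+x. integral\<^sup>N (K x) f \<partial>\<mu>)"
    using f by (simp add: Pop_K)
  also have "\<dots> = integral\<^sup>N (bind \<mu> K) f"
    by (rule nn_integral_bind[OF f K_kernel_mu, symmetric])
  finally show ?thesis by (simp add: K_inv)
qed

lemma mu_fin: "emeasure \<mu> UNIV < \<infinity>"
  using finite_measure.emeasure_finite[OF mu_finite, of UNIV] by (simp add: top.not_eq_extremum)

lemma int_le1_fin: "(\<And>x. f x \<le> 1) \<Longrightarrow> integral\<^sup>N \<mu> f < \<infinity>"
proof -
  assume "\<And>x. f x \<le> 1"
  then have "integral\<^sup>N \<mu> f \<le> (\<integral>\<^sup>+x. 1 \<partial>\<mu>)" by (intro nn_integral_mono) auto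
  also have "\<dots> = emeasure \<mu> UNIV" by simp
  finally show ?thesis using mu_fin by (simp add: le_less_trans)
qed


lemma tau_pred: "{\<omega>. P (\<tau> \<omega>)} \<in> sets path_space"
  using measurable_sets[OF tau_meas, of "{a. P a}"] by (simp add: vimage_def)

lemma tau_pred_ind: "indicator {\<omega>. P (\<tau> \<omega>)} \<in> borel_measurable path_space"
  by (rule borel_measurable_indicator[OF tau_pred])

lemma Px_le1: "(\<And>\<omega>. F \<omega> \<le> 1) \<Longrightarrow> integral\<^sup>N (Px x) F \<le> 1"
proof -
  assume "\<And>\<omega>. F \<omega> \<le> 1"
  then have "integral\<^sup>N (Px x) F \<le> (\<integral>\<^sup>+\<omega>. 1 \<partial>Px x)" by (intro nn_integral_mono) auto
  also have "\<dots> = 1" using prob_space.emeasure_space_1[OF prob_Px, of x] by simp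
  finally show ?thesis .
qed

lemma shift_comp_meas: "F \<in> borel_measurable path_space \<Longrightarrow> (\<lambda>\<omega>. F (shift \<omega>)) \<in> borel_measurable path_space"
  by (rule measurable_compose[OF shift_meas])

lemma PopE: "F \<in> borel_measurable path_space \<Longrightarrow>
  Pop Px (\<lambda>y. \<integral>\<^sup>+\<omega>. F \<omega> \<partial>Px y) x = (\<integral>\<^sup>+\<omega>. F (shift \<omega>) \<partial>Px x)"
  using MP[of "\<lambda>_. 1" F x] unfolding Pop_def by simp

lemma SopE: "F \<in> borel_measurable path_space \<Longrightarrow>
  Sop Px \<tau> (\<lambda>y. \<integral>\<^sup>+\<omega>. F \<omega> \<partial>Px y) x = (\<integral>\<^sup>+\<omega>. indicator {\<omega>. \<tau> \<omega> = 1} \<omega> * F (shift \<omega>) \<partial>Px x)"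
proof -
  assume F: "F \<in> borel_measurable path_space"
  have "Sop Px \<tau> (\<lambda>y. \<integral>\<^sup>+\<omega>. F \<omega> \<partial>Px y) x = (\<integral>\<^sup>+\<omega>. indicator (E x) (\<omega> 1) * (\<integral>\<^sup>+\<omega>'. F \<omega>' \<partial>Px (\<omega> 1)) \<partial>Px x)"
    unfolding Sop_def using AE_tau1[of x]
    by (intro nn_integral_cong_AE) (auto elim!: eventually_mono simp: mult.commute split: split_indicator)
  also have "\<dots> = (\<integral>\<^sup>+\<omega>. indicator (E x) (\<omega> 1) * F (shift \<omega>) \<partial>Px x)"
    by (rule MP[symmetric]) (auto simp: F)
  also have "\<dots> = (\<integral>\<^sup>+\<omega>. indicator {\<omega>. \<tau> \<omega> = 1} \<omega> * F (shift \<omega>) \<partial>Px x)"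
    using AE_tau1[of x]
    by (intro nn_integral_cong_AE) (auto elim!: eventually_mono split: split_indicator)
  finally show ?thesis .
qed

definition GQ :: "'a set \<Rightarrow> (nat \<Rightarrow> 'a) \<Rightarrow> ennreal" where
  "GQ A \<omega> = indicator A (\<omega> (the_enat (\<tau> \<omega>))) * indicator {\<omega>. \<tau> \<omega> < \<infinity>} \<omega>"

lemma GQ_meas: "A \<in> sets borel \<Longrightarrow> GQ A \<in> borel_measurable path_space"
proof -
  assume A[measurable]: "A \<in> sets borel"
  have g: "(\<lambda>\<omega>. the_enat (\<tau> \<omega>)) \<in> measurable path_space (count_space UNIV)"
    by (rule measurable_compose[OF tau_meas]) simp
  have "(\<lambda>\<omega>::nat\<Rightarrow>'a. (\<lambda>i \<omega>. \<omega> i) (the_enat (\<tau> \<omega>)) \<omega>) \<in> measurable path_space borel"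
    by (rule measurable_compose_countable[OF _ g]) (rule measurable_component_singleton, simp)
  then have [measurable]: "(\<lambda>\<omega>::nat\<Rightarrow>'a. indicator A (\<omega> (the_enat (\<tau> \<omega>))) :: ennreal) \<in> borel_measurable path_space"
    by (intro measurable_compose[OF _ borel_measurable_indicator[OF A]]) simp
  note [measurable] = tau_pred_ind[of "\<lambda>a. a < \<infinity>"]
  show ?thesis unfolding GQ_def[abs_def] by measurable
qed

lemma GQ_le1: "GQ A \<omega> \<le> 1"
  unfolding GQ_def by (auto split: split_indicator)

lemma GQ_decomp:
  assumes "\<tau> \<omega> \<noteq> 0" and "\<tau> \<omega> \<ge> 2 \<longrightarrow> \<tau> (shift \<omega>) = \<tau> \<omega> - 1"
  shows "GQ A \<omega> = indicator A (\<omega> 1) * indicator {\<omega>. \<tau> \<omega> = 1} \<omega> + indicator {\<omega>. \<tau> \<omega> \<noteq> 1} \<omega> * GQ A (shift \<omega>)"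
proof (cases "\<tau> \<omega>")
  case (enat m)
  show ?thesis
  proof (cases "m = 1")
    case True then show ?thesis using enat by (simp add: GQ_def one_enat_def)
  next
    case False
    with enat assms(1) have m2: "m \<ge> 2" by (cases m) (auto simp: zero_enat_def)
    then have "\<tau> \<omega> \<ge> 2" using enat by (simp add: numeral_eq_enat)
    then have ts: "\<tau> (shift \<omega>) = enat (m - 1)" using assms(2) enat by (simp add: one_enat_def)
    have "shift \<omega> (m - 1) = \<omega> m" using m2 by (simp add: shift_def)
    then show ?thesis using enat ts False by (simp add: GQ_def one_enat_def)
  qed
next
  case infinity
  then have "\<tau> (shift \<omega>) = \<infinity>" using assms(2) by simp
  then show ?thesis using infinity by (simp add: GQ_def)
qed

lemma Qop_GQ: "Qop Px \<tau> (indicator A) = (\<lambda>y. \<integral>\<^sup>+\<omega>. GQ A \<omega> \<partial>Px y)"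
  unfolding Qop_def[abs_def] GQ_def ..

definition TQ :: "'a set \<Rightarrow> 'a \<Rightarrow> ennreal" where
  "TQ A x = (\<integral>\<^sup>+\<omega>. indicator {\<omega>. \<tau> \<omega> \<noteq> 1} \<omega> * GQ A (shift \<omega>) \<partial>Px x)"

lemma TQ_meas: "A \<in> sets borel \<Longrightarrow> TQ A \<in> borel_measurable borel"
proof -
  assume A: "A \<in> sets borel"
  note [measurable] = shift_comp_meas[OF GQ_meas[OF A]] tau_pred_ind[of "\<lambda>a. a \<noteq> 1"]
  show ?thesis unfolding TQ_def[abs_def] by (rule kern_meas) measurable
qed

lemma Q_step1: "A \<in> sets borel \<Longrightarrow> Qop Px \<tau> (indicator A) x = Sop Px \<tau> (indicator A) x + TQ A x"
proof -
  assume A[measurable]: "A \<in> sets borel"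
  note [measurable] = shift_comp_meas[OF GQ_meas[OF A]] tau_pred_ind[of "\<lambda>a. a \<noteq> 1"] comp1_meas[of "indicator A"]
  have "Qop Px \<tau> (indicator A) x = (\<integral>\<^sup>+\<omega>. indicator A (\<omega> 1) * indicator {\<omega>. \<tau> \<omega> = 1} \<omega> + indicator {\<omega>. \<tau> \<omega> \<noteq> 1} \<omega> * GQ A (shift \<omega>) \<partial>Px x)"
  proof -
    have "AE \<omega> in Px x. GQ A \<omega> = indicator A (\<omega> 1) * indicator {\<omega>. \<tau> \<omega> = 1} \<omega> + indicator {\<omega>. \<tau> \<omega> \<noteq> 1} \<omega> * GQ A (shift \<omega>)"
      using AE_tau_pos[of x] AE_tau_shift[of x] by eventually_elim (rule GQ_decomp)
    then show ?thesis unfolding Qop_GQ by (rule nn_integral_cong_AE)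
  qed
  also have "\<dots> = Sop Px \<tau> (indicator A) x + TQ A x"
    unfolding Sop_def TQ_def by (rule nn_integral_add) measurable
  finally show ?thesis .
qed

lemma Q_step2: "A \<in> sets borel \<Longrightarrow> Pop Px (Qop Px \<tau> (indicator A)) x = Sop Px \<tau> (Qop Px \<tau> (indicator A)) x + TQ A x"
proof -
  assume A[measurable]: "A \<in> sets borel"
  note [measurable] = GQ_meas[OF A] shift_comp_meas[OF GQ_meas[OF A]] tau_pred_ind[of "\<lambda>a. a \<noteq> 1"]
  have "Pop Px (Qop Px \<tau> (indicator A)) x = (\<integral>\<^sup>+\<omega>. GQ A (shift \<omega>) \<partial>Px x)"
    unfolding Qop_GQ by (rule PopE) measurable
  also have "\<dots> = (\<integral>\<^sup>+\<omega>. indicator {\<omega>. \<tau> \<omega> = 1} \<omega> * GQ A (shift \<omega>) + indicator {\<omega>. \<tau> \<omega> \<noteq> 1} \<omega> * GQ A (shift \<omega>) \<partial>Px x)"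
    by (intro nn_integral_cong) (auto split: split_indicator)
  also have "\<dots> = (\<integral>\<^sup>+\<omega>. indicator {\<omega>. \<tau> \<omega> = 1} \<omega> * GQ A (shift \<omega>) \<partial>Px x) + TQ A x"
    unfolding TQ_def by (rule nn_integral_add) measurable
  also have "(\<integral>\<^sup>+\<omega>. indicator {\<omega>. \<tau> \<omega> = 1} \<omega> * GQ A (shift \<omega>) \<partial>Px x) = Sop Px \<tau> (Qop Px \<tau> (indicator A)) x"
    unfolding Qop_GQ by (rule SopE[symmetric]) measurable
  finally show ?thesis .
qed

lemma Q_meas: "A \<in> sets borel \<Longrightarrow> Qop Px \<tau> (indicator A) \<in> borel_measurable borel"
  unfolding Qop_GQ by (rule kern_meas, rule GQ_meas)

lemma nu_Qinv: "invariant (Qop Px \<tau>) nu"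
  unfolding invariant_def
proof
  fix A :: "'a set" assume A[measurable]: "A \<in> sets borel"
  note [measurable] = Q_meas[OF A] TQ_meas[OF A]
  have "(\<integral>\<^sup>+x. Qop Px \<tau> (indicator A) x \<partial>\<mu>) = (\<integral>\<^sup>+x. Sop Px \<tau> (indicator A) x \<partial>\<mu>) + (\<integral>\<^sup>+x. TQ A x \<partial>\<mu>)"
    by (simp add: Q_step1 nn_integral_add measurable_cong_sets[OF mu_sets refl])
  moreover have "(\<integral>\<^sup>+x. Pop Px (Qop Px \<tau> (indicator A)) x \<partial>\<mu>) = (\<integral>\<^sup>+x. Sop Px \<tau> (Qop Px \<tau> (indicator A)) x \<partial>\<mu>) + (\<integral>\<^sup>+x. TQ A x \<partial>\<mu>)"
    by (simp add: Q_step2 nn_integral_add measurable_cong_sets[OF mu_sets refl])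
  moreover have "(\<integral>\<^sup>+x. Pop Px (Qop Px \<tau> (indicator A)) x \<partial>\<mu>) = (\<integral>\<^sup>+x. Qop Px \<tau> (indicator A) x \<partial>\<mu>)"
    by (rule inv_ext) measurable
  moreover have "(\<integral>\<^sup>+x. TQ A x \<partial>\<mu>) < \<infinity>"
    by (rule int_le1_fin) (auto simp: TQ_def intro!: Px_le1 mult_le_one GQ_le1 split: split_indicator)
  ultimately have "(\<integral>\<^sup>+x. Sop Px \<tau> (Qop Px \<tau> (indicator A)) x \<partial>\<mu>) = (\<integral>\<^sup>+x. Sop Px \<tau> (indicator A) x \<partial>\<mu>)"
    by (metis ennreal_add_left_cancel add.commute less_irrefl)
  then have "integral\<^sup>N nu (Qop Px \<tau> (indicator A)) = emeasure nu A"
    by (simp add: nu_int nu_emeasure[symmetric] star_fun_def)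
  then show "integral\<^sup>N nu (Qop Px \<tau> (indicator A)) = emeasure nu A" .
qed

definition FR :: "'a set \<Rightarrow> nat \<Rightarrow> (nat \<Rightarrow> 'a) \<Rightarrow> ennreal" where
  "FR A n \<omega> = indicator A (\<omega> n) * indicator {\<omega>. enat n < \<tau> \<omega>} \<omega>"

definition aR :: "'a set \<Rightarrow> nat \<Rightarrow> 'a \<Rightarrow> ennreal" where
  "aR A n y = (\<integral>\<^sup>+\<omega>. FR A n \<omega> \<partial>Px y)"

lemma FR_meas: "A \<in> sets borel \<Longrightarrow> FR A n \<in> borel_measurable path_space"
proof -
  assume A[measurable]: "A \<in> sets borel"
  note [measurable] = tau_pred_ind[of "\<lambda>a. enat n < a"]
  show ?thesis unfolding FR_def[abs_def] by measurable
qed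

lemma aR_meas: "A \<in> sets borel \<Longrightarrow> aR A n \<in> borel_measurable borel"
  unfolding aR_def[abs_def] by (rule kern_meas, rule FR_meas)

lemma aR_le1: "aR A n y \<le> 1"
  unfolding aR_def FR_def by (rule Px_le1) (auto split: split_indicator)

lemma FR_decomp:
  assumes "\<tau> \<omega> \<noteq> 0" and "\<tau> \<omega> \<ge> 2 \<longrightarrow> \<tau> (shift \<omega>) = \<tau> \<omega> - 1"
  shows "FR A n (shift \<omega>) = indicator {\<omega>. \<tau> \<omega> = 1} \<omega> * FR A n (shift \<omega>) + FR A (Suc n) \<omega>"
proof (cases "\<tau> \<omega>")
  case (enat m)
  show ?thesis
  proof (cases "m = 1")
    case True then show ?thesis using enat by (simp add: FR_def one_enat_def)
  next
    case False
    with enat assms(1) have m2: "m \<ge> 2" by (cases m) (auto simp: zero_enat_def)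
    then have "\<tau> \<omega> \<ge> 2" using enat by (simp add: numeral_eq_enat)
    then have ts: "\<tau> (shift \<omega>) = enat (m - 1)" using assms(2) enat by (simp add: one_enat_def)
    have "(n < m - 1) = (Suc n < m)" by arith
    then show ?thesis using enat ts False by (simp add: FR_def one_enat_def shift_def split: split_indicator)
  qed
next
  case infinity
  then have "\<tau> (shift \<omega>) = \<infinity>" using assms(2) by simp
  then show ?thesis using infinity by (simp add: FR_def shift_def)
qed

lemma R_step: "A \<in> sets borel \<Longrightarrow> Pop Px (aR A n) x = Sop Px \<tau> (aR A n) x + aR A (Suc n) x"
proof -
  assume A[measurable]: "A \<in> sets borel"
  note [measurable] = FR_meas[OF A] shift_comp_meas[OF FR_meas[OF A]] tau_pred_ind[of "\<lambda>a. a = 1"]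
  have "Pop Px (aR A n) x = (\<integral>\<^sup>+\<omega>. FR A n (shift \<omega>) \<partial>Px x)"
    unfolding aR_def[abs_def] by (rule PopE) measurable
  also have "\<dots> = (\<integral>\<^sup>+\<omega>. indicator {\<omega>. \<tau> \<omega> = 1} \<omega> * FR A n (shift \<omega>) + FR A (Suc n) \<omega> \<partial>Px x)"
  proof -
    have "AE \<omega> in Px x. FR A n (shift \<omega>) = indicator {\<omega>. \<tau> \<omega> = 1} \<omega> * FR A n (shift \<omega>) + FR A (Suc n) \<omega>"
      using AE_tau_pos[of x] AE_tau_shift[of x] by eventually_elim (rule FR_decomp)
    then show ?thesis by (rule nn_integral_cong_AE)
  qed
  also have "\<dots> = (\<integral>\<^sup>+\<omega>. indicator {\<omega>. \<tau> \<omega> = 1} \<omega> * FR A n (shift \<omega>) \<partial>Px x) + aR A (Suc n) x"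
    unfolding aR_def by (rule nn_integral_add) measurable
  also have "(\<integral>\<^sup>+\<omega>. indicator {\<omega>. \<tau> \<omega> = 1} \<omega> * FR A n (shift \<omega>) \<partial>Px x) = Sop Px \<tau> (aR A n) x"
    unfolding aR_def[abs_def] by (rule SopE[symmetric]) measurable
  finally show ?thesis .
qed

lemma aR0: "aR A 0 y = indicator A y"
proof -
  have "AE \<omega> in Px y. FR A 0 \<omega> = indicator A y"
    using AE_start[of y] AE_tau_pos[of y] by eventually_elim (simp add: FR_def zero_enat_def[symmetric] split: split_indicator)
  then have "aR A 0 y = (\<integral>\<^sup>+\<omega>. indicator A y \<partial>Px y)" unfolding aR_def by (rule nn_integral_cong_AE)
  also have "\<dots> = indicator A y" using prob_space.emeasure_space_1[OF prob_Px, of y] by simp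
  finally show ?thesis .
qed

lemma R_partial: "A \<in> sets borel \<Longrightarrow> integral\<^sup>N \<mu> (aR A n) + (\<Sum>k<n. integral\<^sup>N nu (aR A k)) = emeasure \<mu> A"
proof (induction n)
  case 0
  then show ?case by (simp add: aR0 mu_sets)
next
  case (Suc n)
  note A[measurable] = Suc.prems
  note [measurable] = aR_meas[OF A, of n] aR_meas[OF A, of "Suc n"]
  have "integral\<^sup>N \<mu> (aR A n) = (\<integral>\<^sup>+x. Pop Px (aR A n) x \<partial>\<mu>)"
    by (rule inv_ext[symmetric]) measurable
  also have "\<dots> = (\<integral>\<^sup>+x. Sop Px \<tau> (aR A n) x \<partial>\<mu>) + integral\<^sup>N \<mu> (aR A (Suc n))"
    by (simp add: R_step nn_integral_add measurable_cong_sets[OF mu_sets refl])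
  also have "(\<integral>\<^sup>+x. Sop Px \<tau> (aR A n) x \<partial>\<mu>) = integral\<^sup>N nu (aR A n)"
    by (rule nu_int[symmetric]) measurable
  finally have "integral\<^sup>N \<mu> (aR A n) = integral\<^sup>N nu (aR A n) + integral\<^sup>N \<mu> (aR A (Suc n))" .
  then show ?case using Suc.IH[OF A] by (simp add: ac_simps)
qed

lemma enat_lt_mono: "m \<le> n \<Longrightarrow> enat n < t \<Longrightarrow> enat m < t"
  by (meson enat_ord_simps(1) le_less_trans)

definition bR :: "nat \<Rightarrow> 'a \<Rightarrow> ennreal" where
  "bR n y = (\<integral>\<^sup>+\<omega>. indicator {\<omega>. enat n < \<tau> \<omega>} \<omega> \<partial>Px y)"

lemma bR_meas: "bR n \<in> borel_measurable borel"
  unfolding bR_def[abs_def] by (rule kern_meas, rule tau_pred_ind)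

lemma aR_le_bR: "aR A n y \<le> bR n y"
  unfolding aR_def bR_def FR_def by (intro nn_integral_mono) (auto split: split_indicator)

lemma bR_emeasure: "bR n y = emeasure (Px y) {\<omega>. enat n < \<tau> \<omega>}"
  unfolding bR_def using tau_pred[of "\<lambda>a. enat n < a"] by (simp add: sets_Px)

lemma bR_INF: "(INF n. bR n y) = 0"
proof -
  have dec: "decseq (\<lambda>n. {\<omega>. enat n < \<tau> \<omega>})"
    unfolding decseq_def by (auto intro: enat_lt_mono)
  have fin: "emeasure (Px y) X \<noteq> \<infinity>" for X
    using prob_space.emeasure_le_1[OF prob_Px, of y X] by (auto simp: top_unique)
  have "(INF n. bR n y) = emeasure (Px y) (\<Inter>n. {\<omega>. enat n < \<tau> \<omega>})"
    unfolding bR_emeasure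
    by (rule INF_emeasure_decseq[OF _ dec fin]) (auto simp: sets_Px tau_pred)
  also have "(\<Inter>n. {\<omega>. enat n < \<tau> \<omega>}) = {\<omega>. \<tau> \<omega> = \<infinity>}"
  proof (intro set_eqI iffI)
    fix \<omega> assume "\<omega> \<in> (\<Inter>n. {\<omega>. enat n < \<tau> \<omega>})"
    then show "\<omega> \<in> {\<omega>. \<tau> \<omega> = \<infinity>}" by (cases "\<tau> \<omega>") auto
  qed auto
  also have "emeasure (Px y) {\<omega>. \<tau> \<omega> = \<infinity>} = 0"
    using AE_iff_measurable[of "{\<omega>. \<tau> \<omega> = \<infinity>}" "Px y" "\<lambda>\<omega>. \<tau> \<omega> \<noteq> \<infinity>"] AE_tau_fin[of y] tau_inf_sets
    by (simp add: sets_Px)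
  finally show ?thesis .
qed

lemma bR_int_INF: "(INF n. integral\<^sup>N \<mu> (bR n)) = 0"
proof -
  have "(INF n. integral\<^sup>N \<mu> (bR n)) = (\<integral>\<^sup>+y. (INF n. bR n y) \<partial>\<mu>)"
  proof (rule nn_integral_monotone_convergence_INF_decseq[symmetric])
    show "decseq bR" unfolding decseq_def
      by (auto simp: le_fun_def bR_emeasure intro!: emeasure_mono tau_pred simp: sets_Px intro: enat_lt_mono)
    show "\<And>i. bR i \<in> borel_measurable \<mu>" using bR_meas by (simp add: measurable_cong_sets[OF mu_sets refl])
    show "\<And>i. integral\<^sup>N \<mu> (bR i) < \<infinity>"
      by (rule int_le1_fin) (auto simp: bR_def intro!: Px_le1 split: split_indicator)
  qed
  also have "\<dots> = 0" by (simp add: bR_INF)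
  finally show ?thesis .
qed

lemma R_lim: "A \<in> sets borel \<Longrightarrow> (\<Sum>k. integral\<^sup>N nu (aR A k)) = emeasure \<mu> A"
proof (rule antisym)
  assume A: "A \<in> sets borel"
  let ?S = "\<Sum>k. integral\<^sup>N nu (aR A k)"
  show "?S \<le> emeasure \<mu> A"
  proof (rule suminf_le_const[OF summableI])
    fix n
    show "(\<Sum>k<n. integral\<^sup>N nu (aR A k)) \<le> emeasure \<mu> A"
      using R_partial[OF A, of n] by (metis le_iff_add add.commute)
  qed
  have "emeasure \<mu> A \<le> ?S + integral\<^sup>N \<mu> (bR n)" for n
  proof -
    have "emeasure \<mu> A = integral\<^sup>N \<mu> (aR A n) + (\<Sum>k<n. integral\<^sup>N nu (aR A k))"
      using R_partial[OF A, of n] by simp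
    also have "\<dots> \<le> integral\<^sup>N \<mu> (bR n) + ?S"
      by (intro add_mono nn_integral_mono aR_le_bR sum_le_suminf[OF summableI]) auto
    finally show ?thesis by (simp add: add.commute)
  qed
  then have "emeasure \<mu> A \<le> (INF n. ?S + integral\<^sup>N \<mu> (bR n))" by (rule INF_greatest)
  also have "\<dots> = ?S + (INF n. integral\<^sup>N \<mu> (bR n))" by (rule INF_ennreal_const_add)
  finally show "emeasure \<mu> A \<le> ?S" by (simp add: bR_int_INF)
qed

lemma Rop_sum: "A \<in> sets borel \<Longrightarrow> Rop Px \<tau> (indicator A) y = (\<Sum>k. aR A k y)"
proof -
  assume A: "A \<in> sets borel"
  have "AE \<omega> in Px y. (\<Sum>k < the_enat (\<tau> \<omega>). indicator A (\<omega> k)) * indicator {\<omega>. \<tau> \<omega> < \<infinity>} \<omega> = (\<Sum>k. FR A k \<omega>)"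
    using AE_tau_fin[of y]
  proof eventually_elim
    case (elim \<omega>)
    then obtain m where m: "\<tau> \<omega> = enat m" by auto
    have "(\<Sum>k. FR A k \<omega>) = (\<Sum>k<m. FR A k \<omega>)"
      by (rule suminf_finite) (auto simp: FR_def m)
    also have "\<dots> = (\<Sum>k<m. indicator A (\<omega> k))"
      by (rule sum.cong) (auto simp: FR_def m)
    finally show ?case by (simp add: m)
  qed
  then have "Rop Px \<tau> (indicator A) y = (\<integral>\<^sup>+\<omega>. (\<Sum>k. FR A k \<omega>) \<partial>Px y)"
    unfolding Rop_def by (rule nn_integral_cong_AE)
  also have "\<dots> = (\<Sum>k. aR A k y)"
    unfolding aR_def by (rule nn_integral_suminf) (simp add: FR_meas[OF A] measurable_cong_sets[OF sets_Px refl])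
  finally show ?thesis .
qed

lemma R_star: "A \<in> sets borel \<Longrightarrow> star_fun (Rop Px \<tau>) nu A = emeasure \<mu> A"
proof -
  assume A: "A \<in> sets borel"
  have "star_fun (Rop Px \<tau>) nu A = (\<integral>\<^sup>+y. (\<Sum>k. aR A k y) \<partial>nu)"
    unfolding star_fun_def by (intro nn_integral_cong) (simp add: Rop_sum[OF A])
  also have "\<dots> = (\<Sum>k. integral\<^sup>N nu (aR A k))"
    by (rule nn_integral_suminf) (simp add: measurable_cong_sets[OF sets_nu refl] aR_meas[OF A])
  also have "\<dots> = emeasure \<mu> A" by (rule R_lim[OF A])
  finally show ?thesis .
qed

lemma nu_UNIV_le: "emeasure nu UNIV \<le> emeasure \<mu> UNIV"
proof -
  have "emeasure nu UNIV = (\<integral>\<^sup>+x. Sop Px \<tau> (indicator UNIV) x \<partial>\<mu>)"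
    using nu_emeasure[of UNIV] by (simp add: star_fun_def)
  also have "\<dots> \<le> (\<integral>\<^sup>+x. Pop Px (indicator UNIV) x \<partial>\<mu>)"
    by (intro nn_integral_mono Sop_le)
  also have "\<dots> = emeasure \<mu> UNIV" using mu_inv unfolding invariant_def by (metis sets.top space_borel)
  finally show ?thesis .
qed

lemma nu_fin: "finite_measure nu"
  using nu_UNIV_le mu_fin by (intro finite_measureI) (auto simp: top.not_eq_extremum dest: le_less_trans)

lemma nu_nonzero: "emeasure nu UNIV \<noteq> 0"
proof
  assume z: "emeasure nu UNIV = 0"
  have "AE x in nu. False" by (rule AE_I[of _ _ UNIV]) (auto simp: z sets_nu)
  then have "\<And>k. integral\<^sup>N nu (aR UNIV k) = 0"
    by (subst nn_integral_cong_AE[where v="\<lambda>_. 0"]) (auto elim: eventually_mono)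
  then have "emeasure \<mu> UNIV = 0" using R_lim[of UNIV] by simp
  then show False using mu_nonzero by simp
qed

lemma nu_ac: "absolutely_continuous \<mu> nu"
  unfolding absolutely_continuous_def
proof
  fix A assume A: "A \<in> null_sets \<mu>"
  then have Ab: "A \<in> sets borel" using mu_sets by auto
  have "emeasure nu A = (\<integral>\<^sup>+x. Sop Px \<tau> (indicator A) x \<partial>\<mu>)"
    using nu_emeasure[OF Ab] by (simp add: star_fun_def)
  also have "\<dots> \<le> (\<integral>\<^sup>+x. Pop Px (indicator A) x \<partial>\<mu>)"
    by (intro nn_integral_mono Sop_le)
  also have "\<dots> = emeasure \<mu> A" using mu_inv Ab unfolding invariant_def by simp
  also have "\<dots> = 0" using A by auto
  finally show "A \<in> null_sets nu" using Ab by (auto simp: sets_nu)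
qed

lemma main: "measure_space UNIV (sets borel) (star_fun (Sop Px \<tau>) \<mu>)
    \<and> finite_measure (star (Sop Px \<tau>) \<mu>)
    \<and> emeasure (star (Sop Px \<tau>) \<mu>) UNIV \<noteq> 0
    \<and> invariant (Qop Px \<tau>) (star (Sop Px \<tau>) \<mu>)
    \<and> absolutely_continuous \<mu> (star (Sop Px \<tau>) \<mu>)
    \<and> star (Rop Px \<tau>) (star (Sop Px \<tau>) \<mu>) = \<mu>"
proof (unfold star_S, intro conjI)
  show "star (Rop Px \<tau>) nu = \<mu>"
    unfolding star_def by (rule measure_of_emeasure_eq(1)[OF mu_sets R_star])
qed (auto simp: ms_S nu_fin nu_nonzero nu_Qinv nu_ac)

end

theorem mainTheorem8:
  fixes K :: "'a::polish_space \<Rightarrow> 'a measure"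
    and Px :: "'a \<Rightarrow> (nat \<Rightarrow> 'a) measure"
    and \<tau> :: "(nat \<Rightarrow> 'a) \<Rightarrow> enat"
    and \<mu> :: "'a measure"
  assumes chain: "markov_laws K Px"
    and stop: "stopping_time_nat \<tau>"
    and compat: "theta_compatible Px \<tau>"
    and integrable_tau: "\<forall>x. (\<integral>\<^sup>+ \<omega>. ennreal_of_enat (\<tau> \<omega>) \<partial>Px x) < \<infinity>"
    and mu_sets: "sets \<mu> = sets borel"
    and mu_finite: "finite_measure \<mu>"
    and mu_nonzero: "emeasure \<mu> (space \<mu>) \<noteq> 0"
    and mu_inv: "invariant (Pop Px) \<mu>"
  shows "measure_space UNIV (sets borel) (star_fun (Sop Px \<tau>) \<mu>)
    \<and> finite_measure (star (Sop Px \<tau>) \<mu>)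
    \<and> emeasure (star (Sop Px \<tau>) \<mu>) UNIV \<noteq> 0
    \<and> invariant (Qop Px \<tau>) (star (Sop Px \<tau>) \<mu>)
    \<and> absolutely_continuous \<mu> (star (Sop Px \<tau>) \<mu>)
    \<and> star (Rop Px \<tau>) (star (Sop Px \<tau>) \<mu>) = \<mu>"
proof -
  interpret S: setting K Px \<tau> \<mu>
    using chain stop compat integrable_tau mu_sets mu_finite mu_nonzero mu_inv
    by (simp add: setting_def setting_axioms_def mchain_def)
  show ?thesis by (rule S.main)
qed

end
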